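(* Let $H$ be a complex Hilbert space and let $T\in B(H)$ be written as $T=A+iB$ with $A=\frac{T+T^*}{2}$ and $B=\frac{T-T^*}{2i}$ (both self-adjoint). Let $n\geq 2$ be an integer. If $T^n=0$ and either $A\geq 0$ or $B\geq 0$, then $T=0$.
   Context: $B(H)$ denotes the algebra of all bounded linear operators from $H$ to $H$. An operator $S\in B(H)$ is positive, written $S\geq 0$, if $\langle Sx,x\rangle\geq 0$ for all $x\in H$. *)

theory Defs
  imports "HOL-Analysis.Analysis"
begin

text \<open>A complex Hilbert space: the carrier is the type 'a (an additive group),
  with complex scalar multiplication sc and inner product ip (linear in the
  first argument, conjugate-linear in the second), complete for the induced norm.\<close>

definition cnorm :: "('a \<Rightarrow> 'a \<Rightarrow> complex) \<Rightarrow> 'a \<Rightarrow> real" where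
  "cnorm ip x = sqrt (Re (ip x x))"

definition complex_hilbert_space ::
  "(complex \<Rightarrow> 'a::ab_group_add \<Rightarrow> 'a) \<Rightarrow> ('a \<Rightarrow> 'a \<Rightarrow> complex) \<Rightarrow> bool" where
  "complex_hilbert_space sc ip \<longleftrightarrow>
     (\<forall>a x y. sc a (x + y) = sc a x + sc a y) \<and>
     (\<forall>a b x. sc (a + b) x = sc a x + sc b x) \<and>
     (\<forall>a b x. sc a (sc b x) = sc (a * b) x) \<and>
     (\<forall>x. sc 1 x = x) \<and>
     (\<forall>x y z. ip (x + y) z = ip x z + ip y z) \<and>
     (\<forall>a x y. ip (sc a x) y = a * ip x y) \<and>
     (\<forall>x y. ip y x = cnj (ip x y)) \<and>
     (\<forall>x. Im (ip x x) = 0 \<and> Re (ip x x) \<ge> 0) \<and>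
     (\<forall>x. ip x x = 0 \<longrightarrow> x = 0) \<and>
     (\<forall>X :: nat \<Rightarrow> 'a.
        (\<forall>e>0. \<exists>N. \<forall>m\<ge>N. \<forall>n\<ge>N. cnorm ip (X m - X n) < e) \<longrightarrow>
        (\<exists>L. \<forall>e>0. \<exists>N. \<forall>n\<ge>N. cnorm ip (X n - L) < e))"

definition bounded_op ::
  "(complex \<Rightarrow> 'a::ab_group_add \<Rightarrow> 'a) \<Rightarrow> ('a \<Rightarrow> 'a \<Rightarrow> complex) \<Rightarrow> ('a \<Rightarrow> 'a) \<Rightarrow> bool" where
  "bounded_op sc ip T \<longleftrightarrow>
     (\<forall>x y. T (x + y) = T x + T y) \<and> (\<forall>a x. T (sc a x) = sc a (T x)) \<and>
     (\<exists>K. \<forall>x. cnorm ip (T x) \<le> K * cnorm ip x)"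

definition is_adjoint :: "('a \<Rightarrow> 'a \<Rightarrow> complex) \<Rightarrow> ('a \<Rightarrow> 'a) \<Rightarrow> ('a \<Rightarrow> 'a) \<Rightarrow> bool" where
  "is_adjoint ip T S \<longleftrightarrow> (\<forall>x y. ip (T x) y = ip x (S y))"

definition positive_op :: "('a \<Rightarrow> 'a \<Rightarrow> complex) \<Rightarrow> ('a \<Rightarrow> 'a) \<Rightarrow> bool" where
  "positive_op ip S \<longleftrightarrow> (\<forall>x. Im (ip (S x) x) = 0 \<and> Re (ip (S x) x) \<ge> 0)"

end

theory Submission
  imports Defs
begin

lemma real_key:
  fixes a :: complex and R :: real
  assumes "\<forall>s::complex. Re (s * a) + (cmod s)^2 * R \<ge> 0"
  shows "a = 0"
proof (rule ccontr)
  assume a: "a \<noteq> 0"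
  define t where "t = 1 / (\<bar>R\<bar> + 1)"
  have tpos: "t > 0" unfolding t_def by simp
  have tR: "t * R < 1" unfolding t_def by (simp add: divide_simps) linarith
  have "Re ((- of_real t * cnj a) * a) + (cmod (- of_real t * cnj a))^2 * R \<ge> 0"
    using assms by blast
  moreover have "Re ((- of_real t * cnj a) * a) = - t * (cmod a)^2"
    by (simp add: mult.assoc complex_mult_cnj cmod_power2 flip: of_real_mult)
       (simp add: power2_eq_square)
  moreover have "(cmod (- of_real t * cnj a))^2 = t^2 * (cmod a)^2"
    using tpos by (simp add: norm_mult power_mult_distrib)
  ultimately have "- t * (cmod a)^2 + t^2 * (cmod a)^2 * R \<ge> 0" by simp
  hence "t * (cmod a)^2 * (t * R - 1) \<ge> 0" by (simp add: algebra_simps power2_eq_square)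
  moreover have "t * (cmod a)^2 > 0" using tpos a by simp
  ultimately have "t * R - 1 \<ge> 0"
    by (simp add: zero_le_mult_iff)
  with tR show False by simp
qed

theorem theorem1p1:
  fixes sc :: "complex \<Rightarrow> 'a::ab_group_add \<Rightarrow> 'a"
    and ip :: "'a \<Rightarrow> 'a \<Rightarrow> complex"
    and T Tstar :: "'a \<Rightarrow> 'a"
    and n :: nat
  assumes H: "complex_hilbert_space sc ip"
    and T: "bounded_op sc ip T"
    and adj: "is_adjoint ip T Tstar"
    and n: "n \<ge> 2"
    and nil: "\<forall>x. (T ^^ n) x = 0"
    and pos: "positive_op ip (\<lambda>x. sc (1/2) (T x + Tstar x))
              \<or> positive_op ip (\<lambda>x. sc (1/(2*\<i>)) (T x - Tstar x))"
  shows "\<forall>x. T x = 0"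
proof -
  note HH = H[unfolded complex_hilbert_space_def]
  have ipadd': "\<forall>x y z. ip (x + y) z = ip x z + ip y z" using HH by (elim conjE) assumption
  have ipsc': "\<forall>a x y. ip (sc a x) y = a * ip x y" using HH by (elim conjE) assumption
  have ipsym': "\<forall>x y. ip y x = cnj (ip x y)" using HH by (elim conjE) assumption
  have ipdef': "\<forall>x. ip x x = 0 \<longrightarrow> x = 0" using HH by (elim conjE) assumption
  note ipadd = ipadd'[rule_format] and ipsc = ipsc'[rule_format] and ipsym = ipsym'[rule_format]
    and ipdef = ipdef'[rule_format]
  note TT = T[unfolded bounded_op_def]
  have Tadd': "\<forall>x y. T (x + y) = T x + T y" using TT by (elim conjE) assumption
  have Tsc': "\<forall>a x. T (sc a x) = sc a (T x)" using TT by (elim conjE) assumption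
  note Tadd = Tadd'[rule_format] and Tsc = Tsc'[rule_format]
  have adj': "\<And>x y. ip (T x) y = ip x (Tstar y)" using adj unfolding is_adjoint_def by blast
  have ip0: "\<And>z. ip 0 z = 0" using ipadd[of 0 0] by simp
  have ip0': "\<And>z. ip z 0 = 0" using ip0 ipsym by (metis complex_cnj_zero)
  have ipadd2: "\<And>x y z. ip z (x + y) = ip z x + ip z y"
    by (metis ipadd ipsym complex_cnj_add)
  have ipsc2: "\<And>a x y. ip x (sc a y) = cnj a * ip x y"
    by (metis ipsc ipsym complex_cnj_mult)
  have T0: "T 0 = 0" using Tadd[of 0 0] by simp
  obtain w :: complex where w: "w \<noteq> 0" and acc: "\<And>x. Re (w * ip (T x) x) \<ge> 0"
  proof (cases "positive_op ip (\<lambda>x. sc (1/2) (T x + Tstar x))")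
    case True
    have "\<And>x. Re (1 * ip (T x) x) \<ge> 0"
    proof -
      fix x
      have "Re (ip (sc (1/2) (T x + Tstar x)) x) \<ge> 0"
        using True unfolding positive_op_def by blast
      moreover have "ip (Tstar x) x = cnj (ip (T x) x)"
        using ipsym adj' by metis
      moreover have "ip (sc (1/2) (T x + Tstar x)) x = (1/2) * (ip (T x) x + ip (Tstar x) x)"
        by (simp add: ipsc ipadd)
      ultimately show "Re (1 * ip (T x) x) \<ge> 0" by simp
    qed
    then show ?thesis using that[of 1] by simp
  next
    case False
    with pos have P: "positive_op ip (\<lambda>x. sc (1/(2*\<i>)) (T x - Tstar x))" by blast
    have "\<And>x. Re ((- \<i>) * ip (T x) x) \<ge> 0"
    proof -
      fix x
      have "Re (ip (sc (1/(2*\<i>)) (T x - Tstar x)) x) \<ge> 0"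
        using P unfolding positive_op_def by blast
      moreover have "ip (T x - Tstar x) x = ip (T x) x - ip (Tstar x) x"
        using ipadd[of "T x - Tstar x" "Tstar x" x] by simp
      moreover have "ip (Tstar x) x = cnj (ip (T x) x)"
        using ipsym adj' by metis
      ultimately have "Re ((1/(2*\<i>)) * (ip (T x) x - cnj (ip (T x) x))) \<ge> 0"
        by (simp only: ipsc)
      then show "Re ((- \<i>) * ip (T x) x) \<ge> 0" by (simp add: complex_diff_cnj)
    qed
    then show ?thesis using that[of "- \<i>"] by simp
  qed
  have kerT: "Tstar x = 0" if Tx: "T x = 0" for x
  proof -
    have c0: "ip (T y) x = 0" for y
    proof -
      have "\<forall>s. Re (s * (w * ip (T y) x)) + (cmod s)^2 * Re (w * ip (T y) y) \<ge> 0"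
      proof
        fix s
        have "T (x + sc s y) = sc s (T y)" using Tadd Tsc Tx by simp
        hence "ip (T (x + sc s y)) (x + sc s y) = s * (ip (T y) x + cnj s * ip (T y) y)"
          by (simp add: ipsc ipadd2 ipsc2 algebra_simps)
        hence "w * ip (T (x + sc s y)) (x + sc s y)
              = s * (w * ip (T y) x) + (s * cnj s) * (w * ip (T y) y)"
          by (simp add: algebra_simps)
        moreover have "s * cnj s = of_real ((cmod s)^2)" by (metis complex_norm_square of_real_power)
        ultimately have "w * ip (T (x + sc s y)) (x + sc s y)
              = s * (w * ip (T y) x) + of_real ((cmod s)^2) * (w * ip (T y) y)" by simp
        then show "Re (s * (w * ip (T y) x)) + (cmod s)^2 * Re (w * ip (T y) y) \<ge> 0"
          using acc[of "x + sc s y"] by simp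
      qed
      from real_key[OF this] w show ?thesis by simp
    qed
    have "ip (Tstar x) (Tstar x) = 0"
      using c0[of "Tstar x"] adj' ipsym by (metis complex_cnj_zero)
    thus ?thesis using ipdef by blast
  qed
  have ker2: "T x = 0" if "T (T x) = 0" for x
  proof -
    have "Tstar (T x) = 0" using kerT that by blast
    hence "ip (T x) (T x) = 0" using adj' ip0' by metis
    thus ?thesis using ipdef by blast
  qed
  have gen: "\<And>x. (T ^^ Suc k) x = 0 \<Longrightarrow> T x = 0" for k
  proof (induction k)
    case 0 thus ?case by simp
  next
    case (Suc k)
    fix x
    assume "(T ^^ Suc (Suc k)) x = 0"
    hence "(T ^^ Suc k) (T x) = 0" by (simp only: funpow_Suc_right o_apply)
    hence "T (T x) = 0" using Suc.IH by blast
    thus "T x = 0" using ker2 by blast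
  qed
  show ?thesis
  proof
    fix x
    obtain k where "n = Suc k" using n by (cases n) auto
    thus "T x = 0" using gen nil by blast
  qed
qed

end
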